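(* Let $(X,d)$ be a complete metric space, $\lambda>0$, and $\ell\in\mathrm{LSC}(X)$ bounded with $\inf_X\ell=0$. Then there exists a unique solution of $(\mathcal{G}_\lambda)$. Moreover, this solution is bounded and Lipschitz.
   Context: $\mathrm{LSC}(X)$ is the set of real-valued lower semicontinuous functions on $X$. Global slope: $G[u](x)=\sup_{y\neq x}\frac{(u(x)-u(y))_+}{d(x,y)}$ if $u(x)<+\infty$, $G[u](x)=+\infty$ otherwise. Equation $(\mathcal{G}_\lambda)$: a solution is a lower semicontinuous $u:X\to\mathbb{R}\cup\{+\infty\}$ with $\inf_Xu=0$ and $\lambda u(x)+G[u](x)=\ell(x)$ for all $x\in X$. *)

theory Defs
  imports "HOL-Analysis.Analysis" "HOL-Library.Extended_Real"
begin

definition lsc :: "('a::topological_space \<Rightarrow> 'b::linorder) \<Rightarrow> bool" where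
  "lsc f \<longleftrightarrow> (\<forall>t. open {x. t < f x})"

text \<open>Global slope of u : X -> R \<union> {+\<infinity>} (represented in ereal, never -\<infinity>).
  The supremum over y \<noteq> x of the positive part of (u x - u y)/d(x,y); the term for y = x
  is replaced by 0, which is harmless since all terms are nonnegative (and gives 0 if X = {x}).\<close>
definition global_slope :: "('a::metric_space \<Rightarrow> ereal) \<Rightarrow> 'a \<Rightarrow> ereal" where
  "global_slope u x = (if u x = \<infinity> then \<infinity>
     else (SUP y. if y = x then 0 else max 0 (u x - u y) / ereal (dist x y)))"

definition is_solution_G :: "real \<Rightarrow> ('a::metric_space \<Rightarrow> real) \<Rightarrow> ('a \<Rightarrow> ereal) \<Rightarrow> bool" where
  "is_solution_G lam ell u \<longleftrightarrow>
     (\<forall>x. u x \<noteq> -\<infinity>) \<and> lsc u \<and> (INF x. u x) = 0 \<and>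
     (\<forall>x. ereal lam * u x + global_slope u x = ereal (ell x))"

end

theory Submission
  imports Defs
begin

lemma slope_term:
  fixes U :: "'a::metric_space \<Rightarrow> real"
  assumes "y \<noteq> x"
  shows "max 0 (ereal (U x) - ereal (U y)) / ereal (dist x y) = ereal (max 0 (U x - U y) / dist x y)"
  using assms by (simp add: max_def)

lemma slope_le:
  fixes U :: "'a::metric_space \<Rightarrow> real"
  shows "global_slope (\<lambda>x. ereal (U x)) x \<le> ereal c \<longleftrightarrow> (0 \<le> c \<and> (\<forall>y. y \<noteq> x \<longrightarrow> U x - U y \<le> c * dist x y))"
proof -
  have "global_slope (\<lambda>x. ereal (U x)) x \<le> ereal c \<longleftrightarrow>
     (\<forall>y. (if y = x then 0 else max 0 (ereal (U x) - ereal (U y)) / ereal (dist x y)) \<le> ereal c)"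
    proof - have "ereal (U x) \<noteq> \<infinity>" by simp then show ?thesis by (simp only: global_slope_def if_False SUP_le_iff ball_UNIV) qed
  also have "\<dots> \<longleftrightarrow> (0 \<le> c \<and> (\<forall>y. y \<noteq> x \<longrightarrow> max 0 (U x - U y) / dist x y \<le> c))"
  proof -
    have e: "\<And>y. y \<noteq> x \<Longrightarrow> (max 0 (ereal (U x) - ereal (U y)) / ereal (dist x y) \<le> ereal c) = (max 0 (U x - U y) / dist x y \<le> c)"
      by (subst slope_term) auto
    show ?thesis
    proof
      assume a: "\<forall>y. (if y = x then 0 else max 0 (ereal (U x) - ereal (U y)) / ereal (dist x y)) \<le> ereal c"
      from a[rule_format, of x] have "0 \<le> c" by simp
      moreover have "\<forall>y. y \<noteq> x \<longrightarrow> max 0 (U x - U y) / dist x y \<le> c"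
        using a e by (metis (full_types))
      ultimately show "0 \<le> c \<and> (\<forall>y. y \<noteq> x \<longrightarrow> max 0 (U x - U y) / dist x y \<le> c)" by blast
    next
      assume "0 \<le> c \<and> (\<forall>y. y \<noteq> x \<longrightarrow> max 0 (U x - U y) / dist x y \<le> c)"
      then show "\<forall>y. (if y = x then 0 else max 0 (ereal (U x) - ereal (U y)) / ereal (dist x y)) \<le> ereal c"
        using e by (auto simp del: ereal_divide)
    qed
  qed
  also have "\<dots> \<longleftrightarrow> (0 \<le> c \<and> (\<forall>y. y \<noteq> x \<longrightarrow> U x - U y \<le> c * dist x y))"
    by (auto simp: divide_le_eq)
  finally show ?thesis .
qed


lemma ekeland:
  fixes f :: "'a::complete_space \<Rightarrow> real"
  assumes cont: "continuous_on UNIV f" and lb: "\<And>x. m \<le> f x" and k: "k > 0"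
  shows "\<exists>z. f z \<le> f x0 \<and> (\<forall>y. f z \<le> f y + k * dist z y)"
proof -
  define S where "S x = {y. f y + k * dist x y \<le> f x}" for x
  have refl: "x \<in> S x" for x by (simp add: S_def)
  have trans: "z \<in> S x" if "y \<in> S x" "z \<in> S y" for x y z
  proof -
    have "dist x z \<le> dist x y + dist y z" by (rule dist_triangle)
    then have "k * dist x z \<le> k * dist x y + k * dist y z" using k
      by (metis distrib_left mult_le_cancel_left_pos)
    then show ?thesis using that by (simp add: S_def)
  qed
  have clo: "closed (S x)" for x
    unfolding S_def
    by (intro closed_Collect_le continuous_intros continuous_on_subset[OF cont]) auto
  have bdd: "bdd_below (f ` S x)" for x by (rule bdd_belowI2[where m=m]) (rule lb)
  have "\<exists>y. y \<in> S x \<and> f y \<le> Inf (f ` S x) + 1 / Suc n" for x n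
  proof -
    have "Inf (f ` S x) < Inf (f ` S x) + 1 / Suc n" by simp
    from cInf_lessD[OF _ this] refl obtain t where "t \<in> f ` S x" "t < Inf (f ` S x) + 1 / Suc n"
      by blast
    then show ?thesis by force
  qed
  then obtain g where g: "\<And>x n. g x n \<in> S x \<and> f (g x n) \<le> Inf (f ` S x) + 1 / Suc n"
    by metis
  define s where "s = rec_nat x0 (\<lambda>n sn. g sn n)"
  have s0: "s 0 = x0" and sS: "s (Suc n) = g (s n) n" for n by (simp_all add: s_def)
  have mono: "s m \<in> S (s n)" if "n \<le> m" for m n
    using that
  proof (induction m)
    case 0 then show ?case using refl by simp
  next
    case (Suc m)
    show ?case
    proof (cases "n = Suc m")
      case True then show ?thesis using refl by simp
    next
      case False
      then have "s m \<in> S (s n)" using Suc by simp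
      moreover have "s (Suc m) \<in> S (s m)" using g sS by simp
      ultimately show ?thesis using trans by blast
    qed
  qed
  have key: "k * dist (s (Suc n)) z \<le> 1 / Suc n" if "z \<in> S (s (Suc n))" for n z
  proof -
    have "z \<in> S (s n)" using trans[OF _ that] g sS by metis
    then have "Inf (f ` S (s n)) \<le> f z" by (intro cInf_lower bdd) auto
    moreover have "f z + k * dist (s (Suc n)) z \<le> f (s (Suc n))" using that by (simp add: S_def)
    moreover have "f (s (Suc n)) \<le> Inf (f ` S (s n)) + 1 / Suc n" using g sS by simp
    ultimately show ?thesis by linarith
  qed
  have small: "c \<le> 0" if "\<And>n. c \<le> 2 / (k * Suc n)" for c
  proof (rule ccontr)
    assume "\<not> c \<le> 0"
    then have "c * k / 2 > 0" using k by simp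
    from ex_inverse_of_nat_less[OF this] obtain n :: nat where n: "n > 0" "inverse (real n) < c * k / 2"
      by blast
    have "c \<le> 2 / (k * Suc n)" by (rule that)
    also have "\<dots> \<le> 2 / (k * n)" using n k by (intro divide_left_mono) auto
    also have "2 / (k * n) = (2 / k) * inverse (real n)" by (simp add: divide_inverse)
    also have "\<dots> < (2 / k) * (c * k / 2)" using n k by (intro mult_strict_left_mono) auto
    also have "\<dots> = c" using k by simp
    finally show False by simp
  qed
  have "Cauchy s"
  proof (rule metric_CauchyI)
    fix e :: real assume e: "e > 0"
    then have "k * e / 2 > 0" using k by simp
    from ex_inverse_of_nat_less[OF this] obtain M :: nat where M: "M > 0" "inverse (real M) < k * e / 2"
      by blast
    have b: "dist (s M) (s m) < e / 2" if "m \<ge> M" for m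
    proof -
      obtain M' where M': "M = Suc M'" using M gr0_implies_Suc by blast
      have "s m \<in> S (s (Suc M'))" using mono that M' by simp
      from key[OF this] have "k * dist (s M) (s m) \<le> 1 / M" unfolding M' .
      also have "\<dots> < k * e / 2" using M by (simp add: inverse_eq_divide)
      finally show ?thesis using k by simp
    qed
    show "\<exists>M. \<forall>m\<ge>M. \<forall>n\<ge>M. dist (s m) (s n) < e"
    proof (intro exI allI impI)
      fix m n assume "m \<ge> M" "n \<ge> M"
      then have "dist (s M) (s m) < e / 2" "dist (s M) (s n) < e / 2" using b by auto
      then show "dist (s m) (s n) < e" using dist_triangle3[of "s m" "s n" "s M"] by linarith
    qed
  qed
  then obtain z where lim: "s \<longlonglongrightarrow> z" using Cauchy_convergent convergent_def by blast
  have zin: "z \<in> S (s n)" for n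
  proof (rule Lim_in_closed_set[OF clo _ _ lim])
    show "\<forall>\<^sub>F m in sequentially. s m \<in> S (s n)"
      using mono by (auto intro: eventually_sequentiallyI[of n])
  qed simp
  show ?thesis
  proof (intro exI conjI allI)
    show "f z \<le> f x0" proof -
      have "f z + k * dist x0 z \<le> f x0" using zin[of 0] s0 by (simp add: S_def)
      moreover have "0 \<le> k * dist x0 z" using k by simp
      ultimately show ?thesis by linarith
    qed
  next
    fix y
    show "f z \<le> f y + k * dist z y"
    proof (rule ccontr)
      assume "\<not> ?thesis"
      then have "y \<in> S z" by (simp add: S_def)
      have "dist y z \<le> 0"
      proof (rule small)
        fix n
        have "y \<in> S (s (Suc n))" using trans[OF zin \<open>y \<in> S z\<close>] .
        from key[OF this] key[OF zin[of "Suc n"]]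
        have h: "k * dist (s (Suc n)) y + k * dist (s (Suc n)) z \<le> 2 / Suc n" by (simp add: add_divide_distrib[symmetric])
        have "dist y z \<le> dist (s (Suc n)) y + dist (s (Suc n)) z"
          using dist_triangle3[of y z "s (Suc n)"] by simp
        then have "k * dist y z \<le> k * dist (s (Suc n)) y + k * dist (s (Suc n)) z"
          using k by (metis distrib_left mult_le_cancel_left_pos)
        with h have "k * dist y z \<le> 2 / Suc n" by linarith
        then have "(k * dist y z) * Suc n \<le> 2" using k by (simp add: pos_le_divide_eq del: of_nat_Suc)
        then show "dist y z \<le> 2 / (k * Suc n)" using k by (simp add: pos_le_divide_eq mult_ac del: of_nat_Suc)
      qed
      then have "y = z" by simp
      then show False using \<open>\<not> f z \<le> f y + k * dist z y\<close> by simp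
    qed
  qed
qed


definition subsol :: "real \<Rightarrow> ('a::metric_space \<Rightarrow> real) \<Rightarrow> ('a \<Rightarrow> real) \<Rightarrow> bool" where
  "subsol lam ell w \<longleftrightarrow> (\<forall>x. lam * w x \<le> ell x) \<and> (\<forall>x y. w x - w y \<le> (ell x - lam * w x) * dist x y)"

lemma subsol_slope:
  "subsol lam ell w \<longleftrightarrow> (\<forall>x. global_slope (\<lambda>x. ereal (w x)) x \<le> ereal (ell x - lam * w x))"
  unfolding subsol_def slope_le by (metis diff_ge_0_iff_ge dist_self mult_zero_right order_refl right_minus_eq)

lemma sol_real:
  assumes lam: "lam > 0" and sol: "is_solution_G lam ell u"
  shows "\<exists>U. u = (\<lambda>x. ereal (U x)) \<and> (\<forall>x. 0 \<le> U x) \<and> (\<forall>x. global_slope u x = ereal (ell x - lam * U x))"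
proof -
  from sol have ninf: "u x \<noteq> -\<infinity>" and inf0: "(INF x. u x) = 0"
    and eq: "ereal lam * u x + global_slope u x = ereal (ell x)" for x
    unfolding is_solution_G_def by auto
  have pinf: "u x \<noteq> \<infinity>" for x
  proof
    assume "u x = \<infinity>"
    then have "global_slope u x = \<infinity>" by (simp add: global_slope_def)
    with \<open>u x = \<infinity>\<close> eq[of x] lam show False by simp
  qed
  define U where "U x = real_of_ereal (u x)" for x
  have uU: "u = (\<lambda>x. ereal (U x))"
    unfolding U_def fun_eq_iff
  proof
    fix x show "u x = ereal (real_of_ereal (u x))" using ninf[of x] pinf[of x] by (cases "u x") auto
  qed
  have nn: "0 \<le> U x" for x
  proof -
    have "(INF x. u x) \<le> u x" by (rule INF_lower) simp
    then show ?thesis using inf0 uU by simp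
  qed
  have "global_slope u x = ereal (ell x - lam * U x)" for x
  proof (cases "global_slope u x")
    case (real r)
    then show ?thesis using eq[of x] uU by simp
  next
    case PInf
    then show ?thesis using eq[of x] uU lam by simp
  next
    case MInf
    then show ?thesis using eq[of x] uU lam by simp
  qed
  then show ?thesis using uU nn by blast
qed

lemma subsol_lip:
  assumes "subsol lam ell w" "\<And>x. 0 \<le> w x" "lam > 0" "\<And>x. ell x \<le> B"
  shows "\<bar>w x - w y\<bar> \<le> B * dist x y"
proof -
  have a: "w a - w b \<le> B * dist a b" for a b
  proof -
    have "w a - w b \<le> (ell a - lam * w a) * dist a b" using assms(1) by (simp add: subsol_def)
    also have "\<dots> \<le> B * dist a b"
    proof (rule mult_right_mono)
      have "0 \<le> lam * w a" using assms(2)[of a] assms(3) by simp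
      then show "ell a - lam * w a \<le> B" using assms(4)[of a] by linarith
    qed simp
    finally show ?thesis .
  qed
  show ?thesis using a[of x y] a[of y x] by (simp add: dist_commute abs_le_iff)
qed

lemma lip_cont:
  fixes g :: "'a::metric_space \<Rightarrow> real"
  assumes "\<And>x y. \<bar>g x - g y\<bar> \<le> B * dist x y" "0 \<le> B"
  shows "continuous_on UNIV g"
  by (rule lipschitz_on_continuous_on[of B]) (auto intro!: lipschitz_onI simp: dist_real_def assms)

lemma comparison:
  fixes U W :: "'a::complete_space \<Rightarrow> real"
  assumes lam: "lam > 0" and B: "\<And>x. ell x \<le> B"
    and sw: "subsol lam ell W" and wnn: "\<And>x. 0 \<le> W x"
    and su: "subsol lam ell U" and unn: "\<And>x. 0 \<le> U x"
    and eqU: "\<And>x. global_slope (\<lambda>x. ereal (U x)) x = ereal (ell x - lam * U x)"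
  shows "W x1 \<le> U x1"
proof (rule ccontr)
  assume "\<not> W x1 \<le> U x1"
  define \<delta> where "\<delta> = W x1 - U x1"
  have dpos: "\<delta> > 0" using \<open>\<not> W x1 \<le> U x1\<close> by (simp add: \<delta>_def)
  have B0: "0 \<le> B"
  proof -
    have "lam * W x1 \<le> ell x1" using sw by (simp add: subsol_def)
    moreover have "0 \<le> lam * W x1" using lam wnn[of x1] by simp
    ultimately show ?thesis using B[of x1] by linarith
  qed
  have Wle: "W x \<le> B / lam" for x
  proof -
    have "lam * W x \<le> B" using sw B[of x] by (simp add: subsol_def) (smt (verit))
    then show ?thesis using lam by (simp add: pos_le_divide_eq mult.commute)
  qed
  define f where "f x = U x - W x" for x
  have cf: "continuous_on UNIV f" unfolding f_def
    by (intro continuous_intros lip_cont[OF subsol_lip[OF su unn lam B] B0]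
        lip_cont[OF subsol_lip[OF sw wnn lam B] B0])
  have lb: "- (B / lam) \<le> f x" for x using unn[of x] Wle[of x] by (simp add: f_def)
  define k where "k = lam * \<delta> / 2"
  have k: "k > 0" using lam dpos by (simp add: k_def)
  obtain z where z1: "f z \<le> f x1" and z2: "\<And>y. f z \<le> f y + k * dist z y"
    using ekeland[OF cf lb k, of x1] by blast
  have "global_slope (\<lambda>x. ereal (U x)) z \<le> ereal (ell z - lam * W z + k)"
    unfolding slope_le
  proof (intro conjI allI impI)
    have "lam * W z \<le> ell z" using sw by (simp add: subsol_def)
    then show "0 \<le> ell z - lam * W z + k" using k by simp
  next
    fix y
    have "U z - U y \<le> W z - W y + k * dist z y" using z2[of y] by (simp add: f_def)
    also have "W z - W y \<le> (ell z - lam * W z) * dist z y" using sw by (simp add: subsol_def)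
    finally show "U z - U y \<le> (ell z - lam * W z + k) * dist z y" by (simp add: algebra_simps)
  qed
  then have "ell z - lam * U z \<le> ell z - lam * W z + k" using eqU[of z] by simp
  then have "lam * (W z - U z) \<le> lam * \<delta> / 2" by (simp add: k_def algebra_simps)
  moreover have "W z - U z \<ge> \<delta>" using z1 by (simp add: f_def \<delta>_def)
  then have "lam * \<delta> \<le> lam * (W z - U z)" using lam by simp
  ultimately show False using lam dpos by simp
qed

lemma existence:
  fixes ell :: "'a::metric_space \<Rightarrow> real"
  assumes lam: "lam > 0" and nn: "\<And>x. 0 \<le> ell x" and B: "\<And>x. ell x \<le> B" and lscl: "lsc ell"
  shows "\<exists>v. subsol lam ell v \<and> (\<forall>x. 0 \<le> v x) \<and> (\<forall>w. subsol lam ell w \<longrightarrow> (\<forall>x. w x \<le> v x))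
           \<and> (\<forall>x. global_slope (\<lambda>x. ereal (v x)) x = ereal (ell x - lam * v x))"
proof -
  define S where "S = {w. subsol lam ell w}"
  define v where "v x = (SUP w\<in>S. w x)" for x
  have zS: "(\<lambda>_. 0) \<in> S" using nn by (simp add: S_def subsol_def)
  have wle: "w x \<le> ell x / lam" if "w \<in> S" for w x
  proof -
    have "lam * w x \<le> ell x" using that by (simp add: S_def subsol_def)
    then show ?thesis using lam by (simp add: pos_le_divide_eq mult.commute)
  qed
  have bdd: "bdd_above ((\<lambda>w. w x) ` S)" for x by (rule bdd_aboveI2[where M="ell x / lam"]) (rule wle)
  have upper: "w x \<le> v x" if "w \<in> S" for w x
    unfolding v_def by (rule cSUP_upper[OF that bdd])
  have vnn: "0 \<le> v x" for x using upper[OF zS] by simp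
  have vS: "subsol lam ell v"
    unfolding subsol_def
  proof (intro conjI allI)
    fix x
    have "v x \<le> ell x / lam" unfolding v_def using zS wle by (intro cSUP_least) auto
    then show "lam * v x \<le> ell x" using lam by (simp add: pos_le_divide_eq mult.commute)
  next
    fix x y :: 'a
    have pos: "0 < 1 + lam * dist x y" using lam by (simp add: add_pos_nonneg)
    have "v x \<le> (ell x * dist x y + v y) / (1 + lam * dist x y)"
      unfolding v_def[of x]
    proof (rule cSUP_least)
      show "S \<noteq> {}" using zS by auto
    next
      fix w assume "w \<in> S"
      then have "w x - w y \<le> (ell x - lam * w x) * dist x y" by (simp add: S_def subsol_def)
      moreover have "w y \<le> v y" using upper[OF \<open>w \<in> S\<close>] .
      ultimately have "w x * (1 + lam * dist x y) \<le> ell x * dist x y + v y"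
        by (simp add: algebra_simps)
      then show "w x \<le> (ell x * dist x y + v y) / (1 + lam * dist x y)"
        using pos by (simp add: pos_le_divide_eq)
    qed
    then have "v x * (1 + lam * dist x y) \<le> ell x * dist x y + v y"
      using pos by (simp add: pos_le_divide_eq)
    then show "v x - v y \<le> (ell x - lam * v x) * dist x y" by (simp add: algebra_simps)
  qed
  have vmax: "w x \<le> v x" if "subsol lam ell w" for w x using upper that by (simp add: S_def)
  have eq: "global_slope (\<lambda>x. ereal (v x)) x0 = ereal (ell x0 - lam * v x0)" for x0
  proof (rule ccontr)
    define c where "c = ell x0 - lam * v x0"
    have le: "global_slope (\<lambda>x. ereal (v x)) x0 \<le> ereal c"
      using vS unfolding subsol_slope c_def by blast
    assume "global_slope (\<lambda>x. ereal (v x)) x0 \<noteq> ereal (ell x0 - lam * v x0)"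
    with le have "global_slope (\<lambda>x. ereal (v x)) x0 < ereal c" by (simp add: c_def)
    from ereal_dense2[OF this] obtain t where t1: "global_slope (\<lambda>x. ereal (v x)) x0 < ereal t"
      and t2: "ereal t < ereal c" by blast
    from t1 have t0: "0 \<le> t" and tv: "\<And>y. y \<noteq> x0 \<Longrightarrow> v x0 - v y \<le> t * dist x0 y"
      using slope_le[of v x0 t] by auto
    have tv': "v x0 - v y \<le> t * dist x0 y" for y using tv[of y] by (cases "y = x0") auto
    define \<eta> where "\<eta> = c - t"
    have eta: "\<eta> > 0" using t2 by (simp add: \<eta>_def)
    have "open {y. ell x0 - \<eta> / 4 < ell y}" using lscl by (simp add: lsc_def)
    moreover have "x0 \<in> {y. ell x0 - \<eta> / 4 < ell y}" using eta by simp
    ultimately obtain r where r: "r > 0" "ball x0 r \<subseteq> {y. ell x0 - \<eta> / 4 < ell y}"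
      by (meson openE)
    define \<kappa> where "\<kappa> = t + \<eta> / 2"
    define \<theta> where "\<theta> = min (\<eta> / (4 * lam)) (\<eta> * r / 4)"
    have th: "\<theta> > 0" using eta r lam by (simp add: \<theta>_def)
    have th1: "lam * \<theta> \<le> \<eta> / 4"
    proof -
      have "\<theta> \<le> \<eta> / (4 * lam)" by (simp add: \<theta>_def)
      then show ?thesis using lam by (simp add: pos_le_divide_eq mult.commute)
    qed
    have th2: "\<theta> \<le> \<eta> * r / 4" by (simp add: \<theta>_def)
    define \<phi> where "\<phi> y = v x0 + \<theta> - \<kappa> * dist x0 y" for y
    define w where "w y = max (v y) (\<phi> y)" for y
    have wall: "lam * w z \<le> ell z \<and> (\<forall>y. w z - w y \<le> (ell z - lam * w z) * dist z y)" for z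
      proof (cases "\<phi> z \<le> v z")
        case True
        then have wz: "w z = v z" by (simp add: w_def)
        show ?thesis
        proof (intro conjI allI)
          show "lam * w z \<le> ell z" using vS wz by (simp add: subsol_def)
          fix y
          have "w z - w y \<le> v z - v y" using wz by (simp add: w_def)
          also have "\<dots> \<le> (ell z - lam * w z) * dist z y" using vS wz by (simp add: subsol_def)
          finally show "w z - w y \<le> (ell z - lam * w z) * dist z y" .
        qed
      next
        case False
        then have wz: "w z = \<phi> z" by (simp add: w_def)
        have dz: "dist x0 z < r"
        proof (rule ccontr)
          assume "\<not> dist x0 z < r"
          then have "\<eta> * r / 2 \<le> \<eta> * dist x0 z / 2" using eta by simp
          moreover have "v x0 - v z \<le> t * dist x0 z" by (rule tv')
          ultimately have "\<phi> z \<le> v z + \<theta> - \<eta> * r / 2"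
            by (simp add: \<phi>_def \<kappa>_def algebra_simps)
          moreover have "0 < \<eta> * r" using eta r by simp
          ultimately have "\<phi> z < v z" using th2 by linarith
          with False show False by simp
        qed
        then have lz: "ell x0 - \<eta> / 4 < ell z" using r by auto
        have "\<phi> z \<le> v x0 + \<theta>" using t0 eta by (simp add: \<phi>_def \<kappa>_def)
        then have "lam * \<phi> z \<le> lam * (v x0 + \<theta>)" using lam by (intro mult_left_mono) auto
        then have "lam * \<phi> z \<le> lam * v x0 + lam * \<theta>" by (simp add: distrib_left)
        then have kz: "\<kappa> \<le> ell z - lam * w z"
          using lz th1 unfolding wz \<kappa>_def \<eta>_def c_def by (simp add: field_simps)
        have k0: "0 \<le> \<kappa>" using t0 eta by (simp add: \<kappa>_def)
        show ?thesis
        proof (intro conjI allI)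
          show "lam * w z \<le> ell z" using kz k0 by simp
          fix y
          have "w z - w y \<le> \<phi> z - \<phi> y" using wz by (simp add: w_def)
          also have "\<dots> = \<kappa> * (dist x0 y - dist x0 z)" by (simp add: \<phi>_def algebra_simps)
          also have "\<dots> \<le> \<kappa> * dist z y"
            using k0 dist_triangle[of x0 y z] by (intro mult_left_mono) (auto simp: dist_commute)
          also have "\<dots> \<le> (ell z - lam * w z) * dist z y" using kz by (intro mult_right_mono) auto
          finally show "w z - w y \<le> (ell z - lam * w z) * dist z y" .
        qed
      qed
    then have "subsol lam ell w" by (simp add: subsol_def)
    then have "w x0 \<le> v x0" by (rule vmax)
    moreover have "w x0 = v x0 + \<theta>" using th by (simp add: w_def \<phi>_def)
    ultimately show False using th by simp
  qed
  show ?thesis using vS vnn vmax eq by blast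
qed

theorem corollary3p15:
  fixes ell :: "'a::complete_space \<Rightarrow> real" and lam :: real
  assumes "lam > 0"
    and "lsc ell"
    and "bounded (range ell)"
    and "(INF x. ell x) = 0"
  shows "(\<exists>!u. is_solution_G lam ell u) \<and> (\<forall>u. is_solution_G lam ell u \<longrightarrow>
           (\<exists>M. \<forall>x. \<bar>u x\<bar> \<le> ereal M) \<and>
           (\<exists>L. \<forall>x y. \<bar>real_of_ereal (u x) - real_of_ereal (u y)\<bar> \<le> L * dist x y))"
proof -
  note lam = assms(1)
  have bddb: "bdd_below (range ell)" using assms(3) by (rule bounded_imp_bdd_below)
  have nn: "0 \<le> ell x" for x
    using cINF_lower[OF bddb, of x] assms(4) by simp
  obtain B where B0: "\<forall>x\<in>range ell. \<bar>x\<bar> \<le> B" using assms(3) bounded_real by blast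
  have B: "ell x \<le> B" for x using B0 abs_le_D1 by blast
  obtain v where vS: "subsol lam ell v" and vnn: "\<And>x. 0 \<le> v x"
    and vmax: "\<And>w x. subsol lam ell w \<Longrightarrow> w x \<le> v x"
    and veq: "\<And>x. global_slope (\<lambda>x. ereal (v x)) x = ereal (ell x - lam * v x)"
    using existence[OF lam nn B assms(2)] by blast
  have B00: "0 \<le> B" using nn[of undefined] B[of undefined] by simp
  have vcont: "continuous_on UNIV v"
    by (rule lip_cont[OF subsol_lip[OF vS vnn lam B] B00])
  define u0 where "u0 = (\<lambda>x. ereal (v x))"
  have sol0: "is_solution_G lam ell u0"
    unfolding is_solution_G_def
  proof (intro conjI allI)
    fix x show "u0 x \<noteq> - \<infinity>" by (simp add: u0_def)
  next
    show "lsc u0" unfolding lsc_def u0_def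
    proof
      fix t :: ereal
      show "open {x. t < ereal (v x)}"
        by (rule open_Collect_less[OF continuous_on_const continuous_on_ereal[OF vcont]])
    qed
  next
    show "(INF x. u0 x) = 0"
    proof (rule antisym)
      show "0 \<le> (INF x. u0 x)" by (rule INF_greatest) (simp add: u0_def vnn)
    next
      show "(INF x. u0 x) \<le> 0"
      proof (rule ereal_le_epsilon2)
        fix e :: real assume e: "0 < e"
        have "Inf (range ell) < lam * e" using assms(4) lam e by simp
        from cInf_lessD[OF _ this] obtain x where x: "ell x < lam * e" by auto
        have "lam * v x \<le> ell x" using vS by (simp add: subsol_def)
        then have "lam * v x < lam * e" using x by simp
        then have "v x < e" using lam by simp
        have "(INF x. u0 x) \<le> u0 x" by (rule INF_lower) simp
        also have "\<dots> \<le> 0 + ereal e" using \<open>v x < e\<close> by (simp add: u0_def)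
        finally show "(INF x. u0 x) \<le> 0 + ereal e" .
      qed
    qed
  next
    fix x show "ereal lam * u0 x + global_slope u0 x = ereal (ell x)"
      unfolding u0_def veq by simp
  qed
  have char: "u = u0 \<and> (\<exists>M. \<forall>x. \<bar>u x\<bar> \<le> ereal M) \<and>
           (\<exists>L. \<forall>x y. \<bar>real_of_ereal (u x) - real_of_ereal (u y)\<bar> \<le> L * dist x y)"
    if sol: "is_solution_G lam ell u" for u
  proof -
    obtain U where uU: "u = (\<lambda>x. ereal (U x))" and Unn: "\<And>x. 0 \<le> U x"
      and Ueq: "\<And>x. global_slope u x = ereal (ell x - lam * U x)"
      using sol_real[OF lam sol] by blast
    have Ueq': "global_slope (\<lambda>x. ereal (U x)) x = ereal (ell x - lam * U x)" for x
      using Ueq[of x] uU by simp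
    have US: "subsol lam ell U" unfolding subsol_slope using Ueq' by simp
    have "U x = v x" for x
      using vmax[OF US, of x] comparison[OF lam B vS vnn US Unn Ueq', of x] by simp
    then have e1: "u = u0" using uU by (simp add: u0_def fun_eq_iff)
    have "\<bar>u x\<bar> \<le> ereal (B / lam)" for x
    proof -
      have "lam * U x \<le> B" using US B[of x] by (simp add: subsol_def) (smt (verit))
      then have "U x \<le> B / lam" using lam by (simp add: pos_le_divide_eq mult.commute)
      then show ?thesis using uU Unn[of x] by simp
    qed
    moreover have "\<bar>real_of_ereal (u x) - real_of_ereal (u y)\<bar> \<le> B * dist x y" for x y
      using subsol_lip[OF US Unn lam B, of x y] uU by simp
    ultimately show ?thesis using e1 by blast
  qed
  have "\<exists>!u. is_solution_G lam ell u"
    using sol0 char by blast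
  then show ?thesis using char by blast
qed

end
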